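(* For every positive integer $n$ and every $d\ge0$, \[ \mathrm{ch}\,\mathrm{Ind}^d1_n=\sum_{\mathbf x\in\mathbf N^n,\ |\mathbf x|=d}p_n(\mathbf x)\,t^{\mathbf x},\qquad \mathrm{ch}\,\mathrm{Ind}^d\mathrm{sgn}_n=\sum_{\mathbf x\in\mathbf N^n,\ |\mathbf x|=d}q_n(\mathbf x)\,t^{\mathbf x}. \]
   Context: $\mathbf N$ is the set of non-negative integers; for $\mathbf x\in\mathbf N^n$, $t^{\mathbf x}=t_1^{x_1}\dotsb t_n^{x_n}$ and $|\mathbf x|=x_1+\dots+x_n$. $S_n$ is regarded as the subgroup of permutation matrices in $\mathrm{GL}_n(\mathbf C)$; $1_n$ and $\mathrm{sgn}_n$ are its trivial and sign representations. $M_n$ is the space of $n\times n$ complex matrices and $P^d(M_n)$ the space of homogeneous polynomials of degree $d$ in the entries of $Q\in M_n$. For a representation $(\rho,V)$ of $S_n$, $\mathrm{Ind}^dV=\{f\in P^d(M_n)\otimes V: f(wQ)=\rho(w)f(Q)\ \forall w\in S_n,Q\in M_n\}$ (elements viewed as $V$-valued polynomial functions on $M_n$) with $\mathrm{GL}_n(\mathbf C)$-action $(\mathrm{Ind}^d\rho(g)f)(Q)=f(Qg)$. The character of a polynomial representation $\rho$ of $\mathrm{GL}_n(\mathbf C)$ is $\mathrm{ch}\,\rho(t_1,\dots,t_n)=\mathrm{trace}\,\rho(\mathrm{diag}(t_1,\dots,t_n))$. The functions $p_k,q_k:\mathbf N^n\to\mathbf N$ are defined by $\sum_{\mathbf x}\sum_k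 p_k(\mathbf x)t^{\mathbf x}u^k=\prod_{\mathbf x\in\mathbf N^n}(1-t^{\mathbf x}u)^{-1}$ and $\sum_{\mathbf x}\sum_kq_k(\mathbf x)t^{\mathbf x}u^k=\prod_{\mathbf x\in\mathbf N^n}(1+t^{\mathbf x}u)$; i.e. $p_k(\mathbf x)$ is the number of vector partitions of $\mathbf x$ (unordered decompositions into nonzero vectors of $\mathbf N^n$) with at most $k$ parts, and $q_k(\mathbf x)$ the number of vector partitions of $\mathbf x$ into exactly $k$ or $k-1$ distinct parts. *)

theory Defs
  imports Complex_Main "HOL-Library.Function_Algebras" "HOL-Library.Multiset" "HOL-Combinatorics.Permutations"
begin

text \<open>Matrices in M_n are modelled as functions Q :: nat => nat => complex, of which
only the entries Q i j with i, j < n matter.  Polynomial functions on M_n with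
values in a one-dimensional representation V = C are functions M_n -> complex.\<close>

type_synonym mat = "nat \<Rightarrow> nat \<Rightarrow> complex"

definition fscale :: "complex \<Rightarrow> ('a \<Rightarrow> complex) \<Rightarrow> ('a \<Rightarrow> complex)" where
  "fscale c f = (\<lambda>x. c * f x)"

definition trace_on :: "('a \<Rightarrow> complex) set \<Rightarrow> (('a \<Rightarrow> complex) \<Rightarrow> ('a \<Rightarrow> complex)) \<Rightarrow> complex" where
  "trace_on V T = (let B = (SOME B. B \<subseteq> V \<and> \<not> module.dependent fscale B \<and> module.span fscale B = V)
                   in \<Sum>b\<in>B. module.representation fscale B (T b) b)"

definition matmul :: "nat \<Rightarrow> mat \<Rightarrow> mat \<Rightarrow> mat" where
  "matmul n A B = (\<lambda>i j. \<Sum>k<n. A i k * B k j)"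

definition diagm :: "nat \<Rightarrow> (nat \<Rightarrow> complex) \<Rightarrow> mat" where
  "diagm n t = (\<lambda>i j. if i = j then t i else 0)"

definition permmat :: "(nat \<Rightarrow> nat) \<Rightarrow> mat" where
  "permmat \<sigma> = (\<lambda>i k. if i = \<sigma> k then 1 else 0)"

definition monom_M :: "nat \<Rightarrow> (nat \<Rightarrow> nat \<Rightarrow> nat) \<Rightarrow> mat \<Rightarrow> complex" where
  "monom_M n E = (\<lambda>Q. \<Prod>i<n. \<Prod>j<n. Q i j ^ E i j)"

definition Pd :: "nat \<Rightarrow> nat \<Rightarrow> (mat \<Rightarrow> complex) set" where
  "Pd n d = module.span fscale {monom_M n E | E. (\<Sum>i<n. \<Sum>j<n. E i j) = d}"

definition Ind :: "nat \<Rightarrow> nat \<Rightarrow> ((nat \<Rightarrow> nat) \<Rightarrow> complex) \<Rightarrow> (mat \<Rightarrow> complex) set" where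
  "Ind n d \<rho> = {f \<in> Pd n d. \<forall>\<sigma> Q. \<sigma> permutes {..<n} \<longrightarrow>
                     f (matmul n (permmat \<sigma>) Q) = \<rho> \<sigma> * f Q}"

text \<open>Character of a GL_n-subrepresentation V (with action (g.f)(Q) = f(Qg)) at diag(t).\<close>
definition ch :: "nat \<Rightarrow> (mat \<Rightarrow> complex) set \<Rightarrow> (nat \<Rightarrow> complex) \<Rightarrow> complex" where
  "ch n V t = trace_on V (\<lambda>f Q. f (matmul n Q (diagm n t)))"

definition vecN :: "nat \<Rightarrow> (nat \<Rightarrow> nat) set" where
  "vecN n = {x. \<forall>i\<ge>n. x i = 0}"

definition vecs_deg :: "nat \<Rightarrow> nat \<Rightarrow> (nat \<Rightarrow> nat) set" where
  "vecs_deg n d = {x \<in> vecN n. (\<Sum>i<n. x i) = d}"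

definition tpow :: "nat \<Rightarrow> (nat \<Rightarrow> complex) \<Rightarrow> (nat \<Rightarrow> nat) \<Rightarrow> complex" where
  "tpow n t x = (\<Prod>i<n. t i ^ x i)"

definition pk :: "nat \<Rightarrow> nat \<Rightarrow> (nat \<Rightarrow> nat) \<Rightarrow> nat" where
  "pk n k x = card {M :: (nat \<Rightarrow> nat) multiset.
       (\<forall>v\<in>#M. v \<in> vecN n \<and> v \<noteq> (\<lambda>_. 0)) \<and> (\<lambda>i. \<Sum>v\<in>#M. v i) = x \<and> size M \<le> k}"

definition qk :: "nat \<Rightarrow> nat \<Rightarrow> (nat \<Rightarrow> nat) \<Rightarrow> nat" where
  "qk n k x = card {S :: (nat \<Rightarrow> nat) set. finite S \<and>
       (\<forall>v\<in>S. v \<in> vecN n \<and> v \<noteq> (\<lambda>_. 0)) \<and> (\<lambda>i. \<Sum>v\<in>S. v i) = x \<and>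
       (card S = k \<or> card S + 1 = k)}"

end

theory Submission
  imports Defs "HOL-Computational_Algebra.Polynomial"
begin


global_interpretation fs: vector_space "fscale :: complex \<Rightarrow> ('a \<Rightarrow> complex) \<Rightarrow> ('a \<Rightarrow> complex)"
  by unfold_locales (auto simp: fscale_def fun_eq_iff algebra_simps)

lemma trace_diag:
  fixes T :: "('a \<Rightarrow> complex) \<Rightarrow> ('a \<Rightarrow> complex)"
  assumes finK: "finite K" and inj: "inj_on c K"
    and indep: "\<not> fs.dependent (c ` K)" and sp: "fs.span (c ` K) = V"
    and eig: "\<And>k. k \<in> K \<Longrightarrow> T (c k) = fscale (lam k) (c k)"
    and lin_add: "\<And>x y. T (x + y) = T x + T y"
    and lin_sc: "\<And>a x. T (fscale a x) = fscale a (T x)"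
  shows "trace_on V T = (\<Sum>k\<in>K. lam k)"
proof -
  define C where "C = c ` K"
  have finC: "finite C" using finK by (simp add: C_def)
  define B where "B = (SOME B. B \<subseteq> V \<and> \<not> fs.dependent B \<and> fs.span B = V)"
  have "\<exists>B. B \<subseteq> V \<and> \<not> fs.dependent B \<and> fs.span B = V"
    using indep sp fs.span_superset by blast
  then have Bp: "B \<subseteq> V \<and> \<not> fs.dependent B \<and> fs.span B = V"
    unfolding B_def by (rule someI_ex)
  have finB: "finite B"
    using fs.independent_span_bound[of C B] finC Bp sp by (auto simp: C_def)
  have tr: "trace_on V T = (\<Sum>b\<in>B. fs.representation B (T b) b)"
    unfolding trace_on_def B_def[symmetric] Let_def by simp
  have Tsum: "T (sum g A) = (\<Sum>x\<in>A. T (g x))" for g :: "('a \<Rightarrow> complex) \<Rightarrow> ('a \<Rightarrow> complex)" and A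
  proof -
    have T0: "T 0 = 0" using lin_sc[of 0 0] by (simp add: fscale_def zero_fun_def)
    show ?thesis
    proof (induct A rule: infinite_finite_induct)
      case (infinite A) then show ?case using T0 by (metis sum.infinite)
    next
      case empty then show ?case using T0 by (metis sum.empty)
    next
      case (insert x F) then show ?case using lin_add by (metis sum.insert)
    qed
  qed
  have CV: "C \<subseteq> V" using sp fs.span_superset C_def by blast
  let ?rC = "fs.representation C" and ?rB = "fs.representation B"
  have indC: "\<not> fs.dependent C" using indep C_def by simp
  have indB: "\<not> fs.dependent B" using Bp by simp
  have spC: "fs.span C = V" using sp C_def by simp
  have spB: "fs.span B = V" using Bp by simp
  have lamC: "\<And>x. x \<in> C \<Longrightarrow> T x = fscale (lam (the_inv_into K c x)) x"
    using eig inj by (auto simp: C_def the_inv_into_f_f)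
  define mu where "mu x = lam (the_inv_into K c x)" for x
  have bexp: "b = (\<Sum>x\<in>C. fscale (?rC b x) x)" if "b \<in> B" for b
    using fs.sum_representation_eq[OF indC _ finC subset_refl, of b] that Bp spC by auto
  have Tb: "T b = (\<Sum>x\<in>C. fscale (?rC b x * mu x) x)" if "b \<in> B" for b
  proof -
    have "T b = (\<Sum>x\<in>C. T (fscale (?rC b x) x))" by (subst bexp[OF that]) (rule Tsum)
    also have "\<dots> = (\<Sum>x\<in>C. fscale (?rC b x * mu x) x)"
      by (rule sum.cong) (auto simp: lin_sc lamC mu_def mult.commute)
    finally show ?thesis .
  qed
  have rBT: "?rB (T b) b = (\<Sum>x\<in>C. ?rC b x * mu x * ?rB x b)" if "b \<in> B" for b
  proof -
    have xs: "x \<in> fs.span B" if "x \<in> C" for x using that CV spB by auto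
    have "?rB (T b) b = (\<Sum>x\<in>C. ?rB (fscale (?rC b x * mu x) x) b)"
      unfolding Tb[OF that]
      by (subst fs.representation_sum[OF indB]) (auto intro: fs.span_scale xs)
    also have "\<dots> = (\<Sum>x\<in>C. ?rC b x * mu x * ?rB x b)"
      by (rule sum.cong[OF refl]) (simp add: fs.representation_scale[OF indB xs])
    finally show ?thesis .
  qed
  have "(\<Sum>b\<in>B. ?rB (T b) b) = (\<Sum>x\<in>C. mu x * (\<Sum>b\<in>B. ?rB x b * ?rC b x))"
    by (simp add: rBT sum_distrib_left sum.swap[of _ B] mult_ac)
  also have "\<dots> = (\<Sum>x\<in>C. mu x)"
  proof (rule sum.cong[OF refl])
    fix x assume xC: "x \<in> C"
    have xB: "x \<in> fs.span B" using xC CV spB by auto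
    have "x = (\<Sum>b\<in>B. fscale (?rB x b) b)"
      using fs.sum_representation_eq[OF indB xB finB subset_refl] by simp
    then have "?rC x x = ?rC (\<Sum>b\<in>B. fscale (?rB x b) b) x" by simp
    also have "\<dots> = (\<Sum>b\<in>B. ?rB x b * ?rC b x)"
    proof -
      have bs: "b \<in> fs.span C" if "b \<in> B" for b using that Bp spC by auto
      show ?thesis
        by (subst fs.representation_sum[OF indC]) (auto intro: fs.span_scale bs simp: fs.representation_scale[OF indC bs])
    qed
    finally have "(\<Sum>b\<in>B. ?rB x b * ?rC b x) = 1"
      using fs.representation_basis[OF indC xC] by simp
    then show "mu x * (\<Sum>b\<in>B. ?rB x b * ?rC b x) = mu x" by simp
  qed
  also have "\<dots> = (\<Sum>k\<in>K. lam k)"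
    unfolding C_def mu_def by (subst sum.reindex[OF inj]) (auto intro!: sum.cong simp: the_inv_into_f_f[OF inj])
  finally show ?thesis using tr by simp
qed



lemma digit_bound:
  fixes e :: "nat \<Rightarrow> nat"
  assumes "\<forall>k<m. e k < b"
  shows "(\<Sum>k<m. e k * b^k) < b^m"
  using assms
proof (induct m)
  case 0 then show ?case by simp
next
  case (Suc m)
  have IH: "(\<Sum>k<m. e k * b^k) < b^m" using Suc by auto
  have em: "e m + 1 \<le> b" using Suc by auto
  have "(\<Sum>k<Suc m. e k * b^k) = (\<Sum>k<m. e k * b^k) + e m * b^m" by simp
  also have "\<dots> < b^m + e m * b^m" using IH by simp
  also have "\<dots> = (e m + 1) * b^m" by simp
  also have "\<dots> \<le> b * b^m" using em by (intro mult_right_mono) auto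
  finally show ?case by simp
qed

lemma digit_inj:
  fixes e e' :: "nat \<Rightarrow> nat"
  assumes "\<forall>k<m. e k < b" "\<forall>k<m. e' k < b"
    and "(\<Sum>k<m. e k * b^k) = (\<Sum>k<m. e' k * b^k)"
  shows "\<forall>k<m. e k = e' k"
  using assms
proof (induct m)
  case 0 then show ?case by simp
next
  case (Suc m)
  define S where "S = (\<Sum>k<m. e k * b^k)"
  define S' where "S' = (\<Sum>k<m. e' k * b^k)"
  have S: "S < b^m" unfolding S_def using Suc.prems by (intro digit_bound) auto
  have S': "S' < b^m" unfolding S'_def using Suc.prems by (intro digit_bound) auto
  have eq: "S + e m * b^m = S' + e' m * b^m" using Suc.prems(3) by (simp add: S_def S'_def)
  have bm: "b^m > 0" using S by linarith
  have "(S + e m * b^m) div b^m = e m" using S bm by simp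
  moreover have "(S' + e' m * b^m) div b^m = e' m" using S' bm by simp
  ultimately have em: "e m = e' m" using eq by simp
  with eq have "S = S'" by simp
  then have "\<forall>k<m. e k = e' k" using Suc.prems by (intro Suc.hyps) (auto simp: S_def S'_def)
  with em show ?case by (auto simp: less_Suc_eq)
qed

definition ExM :: "nat \<Rightarrow> nat \<Rightarrow> (nat \<Rightarrow> nat \<Rightarrow> nat) set" where
  "ExM n d = {E. (\<forall>i j. (n \<le> i \<or> n \<le> j) \<longrightarrow> E i j = 0) \<and> (\<Sum>i<n. \<Sum>j<n. E i j) = d}"

definition polyc :: "nat \<Rightarrow> nat \<Rightarrow> ((nat \<Rightarrow> nat \<Rightarrow> nat) \<Rightarrow> complex) \<Rightarrow> mat \<Rightarrow> complex" where
  "polyc n d a = (\<lambda>Q. \<Sum>E\<in>ExM n d. a E * monom_M n E Q)"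

lemma Ex_le: "E \<in> ExM n d \<Longrightarrow> E i j \<le> d"
proof -
  assume E: "E \<in> ExM n d"
  show ?thesis
  proof (cases "i < n \<and> j < n")
    case True
    have "E i j \<le> (\<Sum>j<n. E i j)" using True by (intro member_le_sum) auto
    also have "\<dots> \<le> (\<Sum>i<n. \<Sum>j<n. E i j)" using True by (intro member_le_sum[where f="\<lambda>i. \<Sum>j<n. E i j"]) auto
    finally show ?thesis using E by (simp add: ExM_def)
  next
    case False then show ?thesis using E by (auto simp: ExM_def)
  qed
qed

lemma finite_Ex: "finite (ExM n d)"
proof -
  let ?g = "\<lambda>f i j. if i < n \<and> j < n then f (i, j) else (0::nat)"
  have "ExM n d \<subseteq> ?g ` (({..<n} \<times> {..<n}) \<rightarrow>\<^sub>E {..d})"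
  proof
    fix E assume E: "E \<in> ExM n d"
    let ?f = "restrict (\<lambda>(i,j). E i j) ({..<n} \<times> {..<n})"
    have "?f \<in> ({..<n} \<times> {..<n}) \<rightarrow>\<^sub>E {..d}" using Ex_le[OF E] by auto
    moreover have "E = ?g ?f" using E by (auto simp: ExM_def fun_eq_iff)
    ultimately show "E \<in> ?g ` (({..<n} \<times> {..<n}) \<rightarrow>\<^sub>E {..d})" by blast
  qed
  moreover have "finite (({..<n} \<times> {..<n}) \<rightarrow>\<^sub>E {..d})" by (intro finite_PiE) auto
  ultimately show ?thesis using finite_subset by blast
qed

definition kap :: "nat \<Rightarrow> nat \<Rightarrow> (nat \<Rightarrow> nat \<Rightarrow> nat) \<Rightarrow> nat" where
  "kap n N E = (\<Sum>i<n. (\<Sum>j<n. E i j * N^j) * (N^n)^i)"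

lemma kap_inj:
  assumes E: "E \<in> ExM n d" and E': "E' \<in> ExM n d" and eq: "kap n (Suc d) E = kap n (Suc d) E'"
  shows "E = E'"
proof -
  let ?N = "Suc d"
  have b1: "\<forall>k<n. (\<Sum>j<n. E k j * ?N^j) < ?N^n"
    using Ex_le[OF E] by (intro allI impI digit_bound) (auto simp: less_Suc_eq_le)
  have b2: "\<forall>k<n. (\<Sum>j<n. E' k j * ?N^j) < ?N^n"
    using Ex_le[OF E'] by (intro allI impI digit_bound) (auto simp: less_Suc_eq_le)
  have rows: "\<forall>k<n. (\<Sum>j<n. E k j * ?N^j) = (\<Sum>j<n. E' k j * ?N^j)"
    using digit_inj[OF b1 b2] eq by (simp add: kap_def)
  have "\<forall>j<n. E i j = E' i j" if "i < n" for i
    using rows that Ex_le[OF E] Ex_le[OF E'] by (intro digit_inj) (auto simp: less_Suc_eq_le)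
  then show ?thesis using E E' by (auto simp: ExM_def fun_eq_iff) (metis not_le)
qed

lemma monom_kron:
  "monom_M n E (\<lambda>i j. z ^ (N^j * (N^n)^i)) = z ^ kap n N E"
proof -
  have "kap n N E = (\<Sum>i<n. \<Sum>j<n. E i j * N^j * (N^n)^i)" by (simp add: kap_def sum_distrib_right)
  then show ?thesis by (simp add: monom_M_def kap_def power_sum power_mult[symmetric] mult_ac)
qed

lemma polyc_zero:
  assumes "\<forall>Q. polyc n d a Q = 0" and E0: "E0 \<in> ExM n d"
  shows "a E0 = 0"
proof -
  let ?N = "Suc d"
  define p where "p = (\<Sum>E\<in>ExM n d. Polynomial.monom (a E) (kap n ?N E))"
  have "poly p z = polyc n d a (\<lambda>i j. z ^ (?N^j * (?N^n)^i))" for z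
    by (simp add: p_def poly_sum poly_monom polyc_def monom_kron)
  then have "p = 0" using assms(1) poly_all_0_iff_0 by metis
  then have "0 = coeff p (kap n ?N E0)" by simp
  also have "\<dots> = (\<Sum>E\<in>ExM n d. if E = E0 then a E else 0)"
    unfolding p_def coeff_sum coeff_monom
    by (rule sum.cong[OF refl]) (use kap_inj E0 in auto)
  also have "\<dots> = a E0" using E0 finite_Ex by simp
  finally show ?thesis by simp
qed

lemma polyc_eq:
  assumes "\<forall>Q. polyc n d a Q = polyc n d b Q" and "E \<in> ExM n d"
  shows "a E = b E"
proof -
  have "\<forall>Q. polyc n d (\<lambda>E. a E - b E) Q = 0"
    using assms(1) by (simp add: polyc_def algebra_simps sum_subtractf)
  then show ?thesis using polyc_zero[OF _ assms(2)] by fastforce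
qed




lemma sum_fun_app: "(sum f A) x = (\<Sum>a\<in>A. f a x)"
  by (induct A rule: infinite_finite_induct) auto

lemma polyc_as_sum: "polyc n d a = (\<Sum>E\<in>ExM n d. fscale (a E) (monom_M n E))"
  by (simp add: polyc_def fun_eq_iff sum_fun_app fscale_def)

lemma polyc_in_Pd: "polyc n d a \<in> Pd n d"
  unfolding polyc_as_sum Pd_def
  by (intro fs.span_sum fs.span_scale fs.span_base) (auto simp: ExM_def)

lemma polyc_cong: "(\<And>E. E \<in> ExM n d \<Longrightarrow> a E = b E) \<Longrightarrow> polyc n d a = polyc n d b"
  by (simp add: polyc_def)

lemma polyc_scale: "polyc n d (\<lambda>E. c * a E) = fscale c (polyc n d a)"
  by (simp add: polyc_def fscale_def fun_eq_iff sum_distrib_left mult_ac)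

lemma polyc_add: "polyc n d (\<lambda>E. a E + b E) = polyc n d a + polyc n d b"
  by (simp add: polyc_def fun_eq_iff sum.distrib algebra_simps)

lemma polyc_sum: "polyc n d (\<lambda>E. \<Sum>k\<in>K. f k E) = (\<Sum>k\<in>K. polyc n d (f k))"
  by (simp add: polyc_def fun_eq_iff sum_fun_app sum_distrib_right sum.swap[of _ K])

lemma monom_restrict:
  "monom_M n E = monom_M n (\<lambda>i j. if i < n \<and> j < n then E i j else 0)"
  by (simp add: monom_M_def fun_eq_iff)

lemma Pd_polyc: "f \<in> Pd n d \<Longrightarrow> \<exists>a. f = polyc n d a"
  unfolding Pd_def
proof (induct rule: fs.span_induct)
  case base
  show ?case
  proof (unfold fs.subspace_def, intro conjI ballI allI)
    show "0 \<in> Collect (\<lambda>f. \<exists>a. f = polyc n d a)"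
      by (auto intro!: exI[of _ "\<lambda>_. 0"] simp: polyc_def fun_eq_iff)
    fix x y assume "x \<in> Collect (\<lambda>f. \<exists>a. f = polyc n d a)" "y \<in> Collect (\<lambda>f. \<exists>a. f = polyc n d a)"
    then obtain a b where "x = polyc n d a" "y = polyc n d b" by auto
    then show "x + y \<in> Collect (\<lambda>f. \<exists>a. f = polyc n d a)"
      by (auto intro!: exI[of _ "\<lambda>E. a E + b E"] simp: polyc_add)
  next
    fix c x assume "x \<in> Collect (\<lambda>f. \<exists>a. f = polyc n d a)"
    then obtain a where "x = polyc n d a" by auto
    then show "fscale c x \<in> Collect (\<lambda>f. \<exists>a. f = polyc n d a)"
      by (auto intro!: exI[of _ "\<lambda>E. c * a E"] simp: polyc_scale)
  qed
next
  case (step x)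
  then obtain E where x: "x = monom_M n E" and sE: "(\<Sum>i<n. \<Sum>j<n. E i j) = d" by auto
  define E' where "E' = (\<lambda>i j. if i < n \<and> j < n then E i j else 0)"
  have E': "E' \<in> ExM n d" using sE by (simp add: E'_def ExM_def)
  have pc: "polyc n d (\<lambda>F. if F = E' then 1 else 0) Q = monom_M n E' Q" for Q
  proof -
    have "polyc n d (\<lambda>F. if F = E' then 1 else 0) Q = (\<Sum>F\<in>ExM n d. if F = E' then monom_M n F Q else 0)"
      unfolding polyc_def by (rule sum.cong) auto
    also have "\<dots> = monom_M n E' Q" using E' finite_Ex[of n d] by simp
    finally show ?thesis .
  qed
  have "x = monom_M n E'" unfolding x E'_def by (rule monom_restrict)
  then have "x = polyc n d (\<lambda>F. if F = E' then 1 else 0)" using pc by (simp add: fun_eq_iff)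
  then show ?case by auto
qed

lemma matmul_perm:
  assumes s: "\<sigma> permutes {..<n}" and i: "i < n"
  shows "matmul n (permmat \<sigma>) Q i j = Q (inv \<sigma> i) j"
proof -
  have "matmul n (permmat \<sigma>) Q i j = (\<Sum>k<n. if k = inv \<sigma> i then Q k j else 0)"
    unfolding matmul_def permmat_def
    by (rule sum.cong[OF refl]) (auto simp: permutes_inverses[OF s])
  also have "\<dots> = Q (inv \<sigma> i) j"
  proof -
    have "inv \<sigma> i < n" using permutes_in_image[OF permutes_inv[OF s], of i] i by simp
    then show ?thesis by simp
  qed
  finally show ?thesis .
qed

lemma monom_perm:
  assumes s: "\<sigma> permutes {..<n}"
  shows "monom_M n E (matmul n (permmat \<sigma>) Q) = monom_M n (E \<circ> \<sigma>) Q"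
proof -
  have "monom_M n E (matmul n (permmat \<sigma>) Q) = (\<Prod>i<n. \<Prod>j<n. Q (inv \<sigma> i) j ^ E i j)"
    by (simp add: monom_M_def matmul_perm[OF s])
  also have "\<dots> = (\<Prod>k<n. \<Prod>j<n. Q (inv \<sigma> (\<sigma> k)) j ^ E (\<sigma> k) j)"
    by (rule prod.reindex_bij_betw[symmetric]) (rule permutes_imp_bij[OF s])
  also have "\<dots> = monom_M n (E \<circ> \<sigma>) Q"
    by (simp add: monom_M_def permutes_inverses[OF s])
  finally show ?thesis .
qed

lemma Ex_perm:
  assumes s: "\<sigma> permutes {..<n}" and E: "E \<in> ExM n d"
  shows "E \<circ> \<sigma> \<in> ExM n d"
proof -
  have "(\<Sum>i<n. \<Sum>j<n. E (\<sigma> i) j) = (\<Sum>i<n. \<Sum>j<n. E i j)"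
    by (rule sum.reindex_bij_betw) (rule permutes_imp_bij[OF s])
  moreover have "E (\<sigma> i) j = 0" if "n \<le> i \<or> n \<le> j" for i j
    using that E permutes_not_in[OF s, of i] by (auto simp: ExM_def)
  ultimately show ?thesis using E by (simp add: ExM_def)
qed

lemma polyc_perm:
  assumes s: "\<sigma> permutes {..<n}"
  shows "polyc n d a (matmul n (permmat \<sigma>) Q) = polyc n d (\<lambda>E. a (E \<circ> inv \<sigma>)) Q"
proof -
  have bij: "bij_betw (\<lambda>E. E \<circ> \<sigma>) (ExM n d) (ExM n d)"
  proof (rule bij_betw_byWitness[where f'="\<lambda>E. E \<circ> inv \<sigma>"])
    show "\<forall>E\<in>ExM n d. E \<circ> \<sigma> \<circ> inv \<sigma> = E"
      by (simp add: o_assoc[symmetric] permutes_inv_o[OF s])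
    show "\<forall>E\<in>ExM n d. E \<circ> inv \<sigma> \<circ> \<sigma> = E"
      by (simp add: o_assoc[symmetric] permutes_inv_o[OF s])
    show "(\<lambda>E. E \<circ> \<sigma>) ` ExM n d \<subseteq> ExM n d" using Ex_perm[OF s] by auto
    show "(\<lambda>E. E \<circ> inv \<sigma>) ` ExM n d \<subseteq> ExM n d" using Ex_perm[OF permutes_inv[OF s]] by auto
  qed
  have "polyc n d a (matmul n (permmat \<sigma>) Q) = (\<Sum>E\<in>ExM n d. a (E \<circ> \<sigma> \<circ> inv \<sigma>) * monom_M n (E \<circ> \<sigma>) Q)"
    by (simp add: polyc_def monom_perm[OF s] o_assoc[symmetric] permutes_inv_o[OF s])
  also have "\<dots> = polyc n d (\<lambda>E. a (E \<circ> inv \<sigma>)) Q"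
    unfolding polyc_def by (rule sum.reindex_bij_betw[OF bij, where g="\<lambda>E. a (E \<circ> inv \<sigma>) * monom_M n E Q"])
  finally show ?thesis .
qed

definition colsum :: "nat \<Rightarrow> (nat \<Rightarrow> nat \<Rightarrow> nat) \<Rightarrow> nat \<Rightarrow> nat" where
  "colsum n E = (\<lambda>j. \<Sum>i<n. E i j)"

lemma monom_diag:
  "monom_M n E (matmul n Q (diagm n t)) = monom_M n E Q * tpow n t (colsum n E)"
proof -
  have mm: "matmul n Q (diagm n t) i j = Q i j * t j" if "j < n" for i j
  proof -
    have "matmul n Q (diagm n t) i j = (\<Sum>k<n. if k = j then Q i j * t j else 0)"
      unfolding matmul_def diagm_def by (rule sum.cong) auto
    then show ?thesis using that by simp
  qed
  have "monom_M n E (matmul n Q (diagm n t)) = (\<Prod>i<n. \<Prod>j<n. Q i j ^ E i j * t j ^ E i j)"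
    by (simp add: monom_M_def mm power_mult_distrib)
  also have "\<dots> = monom_M n E Q * (\<Prod>i<n. \<Prod>j<n. t j ^ E i j)"
    by (simp add: monom_M_def prod.distrib)
  also have "(\<Prod>i<n. \<Prod>j<n. t j ^ E i j) = tpow n t (colsum n E)"
  proof -
    have "(\<Prod>i<n. \<Prod>j<n. t j ^ E i j) = (\<Prod>j<n. \<Prod>i<n. t j ^ E i j)"
      by (rule prod.swap)
    then show ?thesis by (simp add: tpow_def colsum_def power_sum)
  qed
  finally show ?thesis .
qed

lemma polyc_diag:
  "polyc n d a (matmul n Q (diagm n t)) = polyc n d (\<lambda>E. a E * tpow n t (colsum n E)) Q"
  by (simp add: polyc_def monom_diag mult_ac)




lemma Ind_subspace: "fs.subspace (Ind n d \<rho>)"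
proof -
  have PdS: "fs.subspace (Pd n d)" unfolding Pd_def by (rule fs.subspace_span)
  show ?thesis
  unfolding fs.subspace_def
proof (intro conjI ballI allI)
  show "0 \<in> Ind n d \<rho>" using fs.subspace_0[OF PdS] by (simp add: Ind_def)
  fix x y assume "x \<in> Ind n d \<rho>" "y \<in> Ind n d \<rho>"
  then show "x + y \<in> Ind n d \<rho>"
    using fs.subspace_add[OF PdS] by (simp add: Ind_def algebra_simps)
next
  fix c x assume "x \<in> Ind n d \<rho>"
  then show "fscale c x \<in> Ind n d \<rho>"
    using fs.subspace_scale[OF PdS] by (simp add: Ind_def fscale_def mult_ac)
qed
qed

lemma orbit_trace:
  fixes \<rho> :: "(nat \<Rightarrow> nat) \<Rightarrow> complex" and K :: "'k set"
    and e :: "'k \<Rightarrow> (nat \<Rightarrow> nat \<Rightarrow> nat)" and b :: "'k \<Rightarrow> (nat \<Rightarrow> nat \<Rightarrow> nat) \<Rightarrow> complex"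
  assumes finK: "finite K"
    and e_in: "\<And>k. k \<in> K \<Longrightarrow> e k \<in> ExM n d"
    and delta: "\<And>k j. k \<in> K \<Longrightarrow> j \<in> K \<Longrightarrow> b k (e j) = (if k = j then 1 else 0)"
    and rho_inv: "\<And>\<sigma>. \<sigma> permutes {..<n} \<Longrightarrow> \<rho> (inv \<sigma>) = \<rho> \<sigma>"
    and b_inv: "\<And>k \<sigma> E. k \<in> K \<Longrightarrow> \<sigma> permutes {..<n} \<Longrightarrow> E \<in> ExM n d \<Longrightarrow> b k (E \<circ> \<sigma>) = \<rho> \<sigma> * b k E"
    and spanning: "\<And>a. (\<forall>\<sigma>. \<sigma> permutes {..<n} \<longrightarrow> (\<forall>E\<in>ExM n d. a (E \<circ> \<sigma>) = \<rho> \<sigma> * a E))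
        \<Longrightarrow> (\<forall>E\<in>ExM n d. a E = (\<Sum>k\<in>K. a (e k) * b k E))"
    and eig: "\<And>k E. k \<in> K \<Longrightarrow> E \<in> ExM n d \<Longrightarrow> tpow n t (colsum n E) * b k E = lam k * b k E"
  shows "ch n (Ind n d \<rho>) t = (\<Sum>k\<in>K. lam k)"
proof -
  define c where "c k = polyc n d (b k)" for k
  have inj: "inj_on c K"
  proof
    fix k j assume k: "k \<in> K" and j: "j \<in> K" and eq: "c k = c j"
    have "b k (e j) = b j (e j)" using eq e_in[OF j] polyc_eq[of n d "b k" "b j"] by (simp add: c_def)
    then show "k = j" using delta[OF k j] delta[OF j j] by (auto split: if_splits)
  qed
  have cInd: "c k \<in> Ind n d \<rho>" if k: "k \<in> K" for k
  proof -
    have "c k (matmul n (permmat \<sigma>) Q) = \<rho> \<sigma> * c k Q" if s: "\<sigma> permutes {..<n}" for \<sigma> Q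
    proof -
      have "c k (matmul n (permmat \<sigma>) Q) = polyc n d (\<lambda>E. b k (E \<circ> inv \<sigma>)) Q"
        by (simp add: c_def polyc_perm[OF s])
      also have "\<dots> = polyc n d (\<lambda>E. \<rho> \<sigma> * b k E) Q"
      proof -
        have "polyc n d (\<lambda>E. b k (E \<circ> inv \<sigma>)) = polyc n d (\<lambda>E. \<rho> \<sigma> * b k E)"
        proof (rule polyc_cong)
          fix E assume "E \<in> ExM n d"
          then show "b k (E \<circ> inv \<sigma>) = \<rho> \<sigma> * b k E"
            using b_inv[OF k permutes_inv[OF s]] rho_inv[OF s] by simp
        qed
        then show ?thesis by simp
      qed
      also have "\<dots> = \<rho> \<sigma> * c k Q" unfolding polyc_scale c_def fscale_def by (rule refl)
      finally show ?thesis .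
    qed
    moreover have "c k \<in> Pd n d" unfolding c_def by (rule polyc_in_Pd)
    ultimately show ?thesis unfolding Ind_def by blast
  qed
  have indep: "\<not> fs.dependent (c ` K)"
  proof
    assume "fs.dependent (c ` K)"
    then obtain u where u: "\<exists>v\<in>c ` K. u v \<noteq> 0" and s0: "(\<Sum>v\<in>c ` K. fscale (u v) v) = 0"
      using fs.dependent_finite[of "c ` K"] finK by auto
    have "(\<Sum>v\<in>c ` K. fscale (u v) v) = (\<Sum>k\<in>K. fscale (u (c k)) (c k))"
      by (rule sum.reindex[OF inj, unfolded comp_def])
    also have "\<dots> = polyc n d (\<lambda>E. \<Sum>k\<in>K. u (c k) * b k E)"
      by (simp add: polyc_sum polyc_scale c_def)
    finally have "\<forall>Q. polyc n d (\<lambda>E. \<Sum>k\<in>K. u (c k) * b k E) Q = 0" using s0 by simp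
    then have "(\<Sum>k\<in>K. u (c k) * b k (e j)) = 0" if "j \<in> K" for j
      using polyc_zero[OF _ e_in[OF that]] by blast
    then have "u (c j) = 0" if "j \<in> K" for j
      using that finK by (simp add: delta if_distrib cong: if_cong)
    with u show False by auto
  qed
  have span: "fs.span (c ` K) = Ind n d \<rho>"
  proof
    show "fs.span (c ` K) \<subseteq> Ind n d \<rho>"
      using cInd Ind_subspace by (intro fs.span_minimal) auto
    show "Ind n d \<rho> \<subseteq> fs.span (c ` K)"
    proof
      fix f assume f: "f \<in> Ind n d \<rho>"
      have "f \<in> Pd n d" using f by (simp add: Ind_def)
      then obtain a where fa: "f = polyc n d a" using Pd_polyc by blast
      have inv1: "\<forall>E\<in>ExM n d. a (E \<circ> inv \<sigma>) = \<rho> \<sigma> * a E" if s: "\<sigma> permutes {..<n}" for \<sigma>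
      proof -
        have "\<forall>Q. polyc n d (\<lambda>E. a (E \<circ> inv \<sigma>)) Q = polyc n d (\<lambda>E. \<rho> \<sigma> * a E) Q"
          using f s by (auto simp: Ind_def fa polyc_perm[OF s] polyc_scale fscale_def)
        then show ?thesis using polyc_eq by blast
      qed
      have "\<forall>\<sigma>. \<sigma> permutes {..<n} \<longrightarrow> (\<forall>E\<in>ExM n d. a (E \<circ> \<sigma>) = \<rho> \<sigma> * a E)"
      proof (intro allI impI)
        fix \<sigma> assume s: "\<sigma> permutes {..<n}"
        show "\<forall>E\<in>ExM n d. a (E \<circ> \<sigma>) = \<rho> \<sigma> * a E"
          using inv1[OF permutes_inv[OF s]] permutes_inv_inv[OF s] rho_inv[OF s] by simp
      qed
      then have aE: "\<forall>E\<in>ExM n d. a E = (\<Sum>k\<in>K. a (e k) * b k E)" by (rule spanning)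
      have "f = polyc n d (\<lambda>E. \<Sum>k\<in>K. a (e k) * b k E)" unfolding fa by (rule polyc_cong) (use aE in blast)
      also have "\<dots> = (\<Sum>k\<in>K. fscale (a (e k)) (c k))" by (simp add: polyc_sum polyc_scale c_def)
      finally show "f \<in> fs.span (c ` K)"
        by (simp add: fs.span_sum fs.span_scale fs.span_base)
    qed
  qed
  have eigc: "(\<lambda>Q. c k (matmul n Q (diagm n t))) = fscale (lam k) (c k)" if k: "k \<in> K" for k
  proof -
    have "(\<lambda>Q. c k (matmul n Q (diagm n t))) = polyc n d (\<lambda>E. b k E * tpow n t (colsum n E))"
      by (simp add: c_def polyc_diag fun_eq_iff)
    also have "\<dots> = polyc n d (\<lambda>E. lam k * b k E)"
      using eig[OF k] by (intro polyc_cong) (simp add: mult.commute)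
    finally show ?thesis by (simp add: polyc_scale c_def)
  qed
  show ?thesis
    unfolding ch_def
    by (rule trace_diag[OF finK inj indep span eigc]) (auto simp: fscale_def)
qed




definition rows :: "nat \<Rightarrow> (nat \<Rightarrow> nat \<Rightarrow> nat) \<Rightarrow> (nat \<Rightarrow> nat) multiset" where
  "rows n E = image_mset E (mset_set {..<n})"

definition nzrows :: "nat \<Rightarrow> (nat \<Rightarrow> nat \<Rightarrow> nat) \<Rightarrow> (nat \<Rightarrow> nat) multiset" where
  "nzrows n E = filter_mset (\<lambda>v. v \<noteq> (\<lambda>_. 0)) (rows n E)"

definition svec :: "(nat \<Rightarrow> nat) multiset \<Rightarrow> nat \<Rightarrow> nat" where
  "svec M = (\<lambda>i. \<Sum>v\<in>#M. v i)"

lemma filter_all: "(\<forall>x\<in>#M. P x) \<Longrightarrow> filter_mset P M = M"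
  by (induct M) auto

lemma sum_mset_zero_elems: "(\<forall>x\<in>#M. f x = (0::'b::comm_monoid_add)) \<Longrightarrow> (\<Sum>x\<in>#M. f x) = 0"
  by (induct M) auto

lemma size_rows[simp]: "size (rows n E) = n"
  by (simp add: rows_def)

lemma rows_perm: "\<sigma> permutes {..<n} \<Longrightarrow> rows n (E \<circ> \<sigma>) = rows n E"
  unfolding rows_def
  by (metis image_mset.compositionality permutes_image_mset)

lemma nzrows_perm: "\<sigma> permutes {..<n} \<Longrightarrow> nzrows n (E \<circ> \<sigma>) = nzrows n E"
  by (simp add: nzrows_def rows_perm)

lemma colsum_rows: "colsum n E = svec (rows n E)"
  by (simp add: colsum_def svec_def rows_def fun_eq_iff sum_unfold_sum_mset image_mset.compositionality comp_def)

lemma svec_union: "svec (A + B) = svec A + svec B"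
  by (simp add: svec_def fun_eq_iff)

lemma svec_nz: "svec (filter_mset (\<lambda>v. v \<noteq> (\<lambda>_. 0)) M) = svec M"
proof -
  have "svec M = svec (filter_mset (\<lambda>v. v \<noteq> (\<lambda>_. 0)) M) + svec (filter_mset (\<lambda>v. \<not> v \<noteq> (\<lambda>_. 0)) M)"
    using arg_cong[OF multiset_partition[of M "\<lambda>v. v \<noteq> (\<lambda>_. 0)"], of svec] by (simp only: svec_union)
  also have "svec (filter_mset (\<lambda>v. \<not> v \<noteq> (\<lambda>_. 0)) M) = 0"
  proof -
    have "(\<Sum>v\<in>#filter_mset (\<lambda>v. \<not> v \<noteq> (\<lambda>_. 0)) M. v i) = 0" for i
      by (rule sum_mset_zero_elems) auto
    then show ?thesis unfolding svec_def zero_fun_def by (rule ext)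
  qed
  finally show ?thesis by simp
qed

lemma colsum_nzrows: "colsum n E = svec (nzrows n E)"
  by (simp add: colsum_rows nzrows_def svec_nz)

lemma rows_from_nz:
  "rows n E = nzrows n E + replicate_mset (n - size (nzrows n E)) (\<lambda>_. 0)"
proof -
  let ?M = "rows n E"
  have p: "?M = filter_mset (\<lambda>v. v \<noteq> (\<lambda>_. 0)) ?M + filter_mset (\<lambda>v. v = (\<lambda>_. 0)) ?M"
    using multiset_partition[of ?M "\<lambda>v. v \<noteq> (\<lambda>_. 0)"] by simp
  have "size ?M = size (filter_mset (\<lambda>v. v \<noteq> (\<lambda>_. 0)) ?M) + size (filter_mset (\<lambda>v. v = (\<lambda>_. 0)) ?M)"
    using arg_cong[OF p, of size] by (simp only: size_union)
  then have s: "size (filter_mset (\<lambda>v. v = (\<lambda>_. 0)) ?M) = n - size (nzrows n E)"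
    by (simp add: nzrows_def)
  have "filter_mset (\<lambda>v. v = (\<lambda>_. 0)) ?M = replicate_mset (n - size (nzrows n E)) (\<lambda>_. 0)"
    using s by (simp add: filter_eq_replicate_mset)
  then show ?thesis using p by (simp add: nzrows_def)
qed

lemma rows_eq_perm:
  assumes E: "E \<in> ExM n d" and E': "E' \<in> ExM n d" and eq: "rows n E = rows n E'"
  obtains \<sigma> where "\<sigma> permutes {..<n}" "E' = E \<circ> \<sigma>"
proof -
  obtain p where p: "p permutes {..<n}" and pe: "\<forall>x\<in>{..<n}. E' x = E (p x)"
    using image_mset_eq_implies_permutes[of "{..<n}" E' E] eq by (auto simp: rows_def)
  have "E' x = E (p x)" for x
  proof (cases "x < n")
    case True then show ?thesis using pe by auto
  next
    case False
    then have "p x = x" using permutes_not_in[OF p] by auto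
    moreover have "E' x = E x" using False E E' by (auto simp: ExM_def fun_eq_iff)
    ultimately show ?thesis by simp
  qed
  then show ?thesis using that[OF p] by (auto simp: fun_eq_iff)
qed

lemma nzrows_eq_perm:
  assumes E: "E \<in> ExM n d" and E': "E' \<in> ExM n d" and eq: "nzrows n E = nzrows n E'"
  obtains \<sigma> where "\<sigma> permutes {..<n}" "E' = E \<circ> \<sigma>"
proof -
  have "rows n E = rows n E'" using rows_from_nz[of n E] rows_from_nz[of n E'] eq by simp
  then obtain \<sigma> where "\<sigma> permutes {..<n}" "E' = E \<circ> \<sigma>" using rows_eq_perm[OF E E'] by blast
  then show ?thesis using that by blast
qed

lemma ExM_row_vecN: "E \<in> ExM n d \<Longrightarrow> E i \<in> vecN n"
  by (auto simp: ExM_def vecN_def)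

lemma ExM_colsum: "E \<in> ExM n d \<Longrightarrow> colsum n E \<in> vecs_deg n d"
proof -
  assume E: "E \<in> ExM n d"
  have "(\<Sum>j<n. \<Sum>i<n. E i j) = (\<Sum>i<n. \<Sum>j<n. E i j)" by (rule sum.swap)
  then show ?thesis using E by (auto simp: vecs_deg_def vecN_def colsum_def ExM_def)
qed

definition mk :: "nat \<Rightarrow> (nat \<Rightarrow> nat) list \<Rightarrow> nat \<Rightarrow> nat \<Rightarrow> nat" where
  "mk n ys = (\<lambda>i j. if i < n \<and> j < n then (ys ! i) j else 0)"

lemma mk_row: "i < n \<Longrightarrow> set ys \<subseteq> vecN n \<Longrightarrow> length ys = n \<Longrightarrow> mk n ys i = ys ! i"
proof -
  assume a: "i < n" "set ys \<subseteq> vecN n" "length ys = n"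
  have "ys ! i \<in> vecN n" using nth_mem[of i ys] a by auto
  then show ?thesis using a(1) by (auto simp: mk_def fun_eq_iff vecN_def)
qed

lemma rows_mk: "set ys \<subseteq> vecN n \<Longrightarrow> length ys = n \<Longrightarrow> rows n (mk n ys) = mset ys"
proof -
  assume a: "set ys \<subseteq> vecN n" "length ys = n"
  have "rows n (mk n ys) = mset (map (mk n ys) [0..<n])"
    by (simp add: rows_def atLeast0LessThan)
  also have "map (mk n ys) [0..<n] = map (\<lambda>i. ys ! i) [0..<n]"
    using mk_row[OF _ a] by auto
  also have "\<dots> = ys" using a(2) map_nth by metis
  finally show ?thesis .
qed

lemma mk_ExM:
  assumes a: "set ys \<subseteq> vecN n" "length ys = n" and s: "svec (mset ys) \<in> vecs_deg n d"
  shows "mk n ys \<in> ExM n d"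
proof -
  have "(\<Sum>i<n. \<Sum>j<n. mk n ys i j) = (\<Sum>j<n. \<Sum>i<n. mk n ys i j)" by (rule sum.swap)
  also have "\<dots> = (\<Sum>j<n. colsum n (mk n ys) j)" by (simp add: colsum_def)
  also have "\<dots> = d" using s by (simp add: colsum_rows rows_mk[OF a] vecs_deg_def)
  finally show ?thesis by (auto simp: ExM_def mk_def)
qed




definition P1 :: "nat \<Rightarrow> nat \<Rightarrow> (nat \<Rightarrow> nat) multiset set" where
  "P1 n d = {M. (\<forall>v\<in>#M. v \<in> vecN n \<and> v \<noteq> (\<lambda>_. 0)) \<and> size M \<le> n \<and> svec M \<in> vecs_deg n d}"

lemma nzrows_P1:
  assumes E: "E \<in> ExM n d" shows "nzrows n E \<in> P1 n d"
proof -
  have "v \<in> vecN n \<and> v \<noteq> (\<lambda>_. 0)" if "v \<in># nzrows n E" for v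
    using that ExM_row_vecN[OF E] by (auto simp: nzrows_def rows_def)
  moreover have "size (nzrows n E) \<le> n"
    using size_filter_mset_lesseq[of _ "rows n E"] by (simp add: nzrows_def)
  moreover have "svec (nzrows n E) \<in> vecs_deg n d"
    using ExM_colsum[OF E] by (simp add: colsum_nzrows)
  ultimately show ?thesis by (simp add: P1_def)
qed

lemma filter_replicate_zero: "filter_mset (\<lambda>v. v \<noteq> x) (replicate_mset k x) = {#}"
  by (induct k) auto

lemma P1_nzrows:
  assumes M: "M \<in> P1 n d" shows "\<exists>E\<in>ExM n d. nzrows n E = M"
proof -
  obtain xs where xs: "mset xs = M" using ex_mset by blast
  define ys where "ys = xs @ replicate (n - length xs) (\<lambda>_. 0::nat)"
  have lxs: "length xs \<le> n" using M xs by (auto simp: P1_def)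
  have len: "length ys = n" using lxs by (simp add: ys_def)
  have zv: "(\<lambda>_. 0::nat) \<in> vecN n" by (simp add: vecN_def)
  have set: "set ys \<subseteq> vecN n" using M xs zv by (auto simp: ys_def P1_def)
  have mys: "mset ys = M + replicate_mset (n - length xs) (\<lambda>_. 0)"
    by (simp add: ys_def xs)
  have filt: "filter_mset (\<lambda>v. v \<noteq> (\<lambda>_. 0)) (mset ys) = M"
    using M by (simp add: mys filter_replicate_zero P1_def filter_all)
  have "svec (mset ys) = svec M" using svec_nz[of "mset ys"] filt by simp
  then have sv: "svec (mset ys) \<in> vecs_deg n d" using M by (simp add: P1_def)
  have "mk n ys \<in> ExM n d" by (rule mk_ExM[OF set len sv])
  moreover have "nzrows n (mk n ys) = M" using filt by (simp add: nzrows_def rows_mk[OF set len])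
  ultimately show ?thesis by blast
qed

lemma finite_P1: "finite (P1 n d)"
proof -
  have "P1 n d \<subseteq> nzrows n ` ExM n d" using P1_nzrows by blast
  then show ?thesis using finite_Ex finite_subset by blast
qed

lemma ch_triv: "ch n (Ind n d (\<lambda>\<sigma>. 1)) t = (\<Sum>M\<in>P1 n d. tpow n t (svec M))"
proof -
  define e where "e M = (SOME E. E \<in> ExM n d \<and> nzrows n E = M)" for M
  have e: "e M \<in> ExM n d \<and> nzrows n (e M) = M" if "M \<in> P1 n d" for M
  proof -
    have "\<exists>E. E \<in> ExM n d \<and> nzrows n E = M" using P1_nzrows[OF that] by blast
    then show ?thesis unfolding e_def by (rule someI_ex)
  qed
  define b where "b M E = (if nzrows n E = M then 1 else (0::complex))" for M E
  show ?thesis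
  proof (rule orbit_trace[where e=e and b=b])
    show "finite (P1 n d)" by (rule finite_P1)
    show "e k \<in> ExM n d" if "k \<in> P1 n d" for k using e[OF that] by blast
    show "b k (e j) = (if k = j then 1 else 0)" if "k \<in> P1 n d" "j \<in> P1 n d" for k j
      using e[OF that(2)] by (auto simp: b_def)
    show "(\<lambda>\<sigma>. 1::complex) (inv \<sigma>) = (\<lambda>\<sigma>. 1) \<sigma>" for \<sigma> by simp
    show "b k (E \<circ> \<sigma>) = (\<lambda>\<sigma>. 1) \<sigma> * b k E" if "\<sigma> permutes {..<n}" for k \<sigma> E
      using nzrows_perm[OF that] by (simp add: b_def)
    show "tpow n t (colsum n E) * b k E = tpow n t (svec k) * b k E" for k E
      by (simp add: b_def colsum_nzrows)
  next
    fix a assume inv: "\<forall>\<sigma>. \<sigma> permutes {..<n} \<longrightarrow> (\<forall>E\<in>ExM n d. a (E \<circ> \<sigma>) = (\<lambda>\<sigma>. 1::complex) \<sigma> * a E)"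
    show "\<forall>E\<in>ExM n d. a E = (\<Sum>k\<in>P1 n d. a (e k) * b k E)"
    proof
      fix E assume E: "E \<in> ExM n d"
      let ?M = "nzrows n E"
      have M: "?M \<in> P1 n d" by (rule nzrows_P1[OF E])
      have "(\<Sum>k\<in>P1 n d. a (e k) * b k E) = (\<Sum>k\<in>P1 n d. if k = ?M then a (e k) else 0)"
        by (rule sum.cong) (auto simp: b_def)
      also have "\<dots> = a (e ?M)" using M finite_P1 by simp
      also have "\<dots> = a E"
      proof -
        obtain \<sigma> where s: "\<sigma> permutes {..<n}" and Eq: "E = e ?M \<circ> \<sigma>"
          using nzrows_eq_perm[of "e ?M" n d E] e[OF M] E by metis
        have "a (e ?M \<circ> \<sigma>) = a (e ?M)" using inv s e[OF M] by auto
        then show ?thesis using Eq by simp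
      qed
      finally show "a E = (\<Sum>k\<in>P1 n d. a (e k) * b k E)" by simp
    qed
  qed
qed

lemma finite_vecs_deg: "finite (vecs_deg n d)"
proof -
  let ?g = "\<lambda>f i. if i < n then f i else (0::nat)"
  have "vecs_deg n d \<subseteq> ?g ` ({..<n} \<rightarrow>\<^sub>E {..d})"
  proof
    fix x assume x: "x \<in> vecs_deg n d"
    have "x i \<le> d" if "i < n" for i
    proof -
      have "x i \<le> (\<Sum>i<n. x i)" using that by (intro member_le_sum) auto
      then show ?thesis using x by (simp add: vecs_deg_def)
    qed
    then have "restrict x {..<n} \<in> {..<n} \<rightarrow>\<^sub>E {..d}" by auto
    moreover have "x = ?g (restrict x {..<n})" using x by (auto simp: vecs_deg_def vecN_def fun_eq_iff)
    ultimately show "x \<in> ?g ` ({..<n} \<rightarrow>\<^sub>E {..d})" by blast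
  qed
  then show ?thesis by (rule finite_subset) (auto intro!: finite_imageI finite_PiE)
qed

lemma sum_P1: "(\<Sum>M\<in>P1 n d. tpow n t (svec M)) = (\<Sum>x\<in>vecs_deg n d. of_nat (pk n n x) * tpow n t x)"
proof -
  have "(\<Sum>M\<in>P1 n d. tpow n t (svec M)) = (\<Sum>x\<in>vecs_deg n d. \<Sum>M\<in>{M. M \<in> P1 n d \<and> svec M = x}. tpow n t (svec M))"
    by (rule sum.group[symmetric, OF finite_P1 finite_vecs_deg]) (auto simp: P1_def)
  also have "\<dots> = (\<Sum>x\<in>vecs_deg n d. of_nat (pk n n x) * tpow n t x)"
  proof (rule sum.cong[OF refl])
    fix x assume x: "x \<in> vecs_deg n d"
    have "{M. M \<in> P1 n d \<and> svec M = x} = {M :: (nat \<Rightarrow> nat) multiset.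
       (\<forall>v\<in>#M. v \<in> vecN n \<and> v \<noteq> (\<lambda>_. 0)) \<and> (\<lambda>i. \<Sum>v\<in>#M. v i) = x \<and> size M \<le> n}"
      using x by (auto simp: P1_def svec_def)
    then have "card {M. M \<in> P1 n d \<and> svec M = x} = pk n n x" by (simp add: pk_def)
    moreover have "(\<Sum>M\<in>{M. M \<in> P1 n d \<and> svec M = x}. tpow n t (svec M)) = of_nat (card {M. M \<in> P1 n d \<and> svec M = x}) * tpow n t x"
      by simp
    ultimately show "(\<Sum>M\<in>{M. M \<in> P1 n d \<and> svec M = x}. tpow n t (svec M)) = of_nat (pk n n x) * tpow n t x" by simp
  qed
  finally show ?thesis .
qed




definition nzset :: "nat \<Rightarrow> (nat \<Rightarrow> nat \<Rightarrow> nat) \<Rightarrow> (nat \<Rightarrow> nat) set" where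
  "nzset n E = E ` {..<n} - {\<lambda>_. 0}"

definition ssum :: "(nat \<Rightarrow> nat) set \<Rightarrow> nat \<Rightarrow> nat" where
  "ssum S = (\<lambda>i. \<Sum>v\<in>S. v i)"

definition P2 :: "nat \<Rightarrow> nat \<Rightarrow> (nat \<Rightarrow> nat) set set" where
  "P2 n d = {S. finite S \<and> (\<forall>v\<in>S. v \<in> vecN n \<and> v \<noteq> (\<lambda>_. 0)) \<and> (card S = n \<or> card S + 1 = n)
     \<and> ssum S \<in> vecs_deg n d}"

lemma svec_mset_set: "finite A \<Longrightarrow> svec (mset_set A) = ssum A"
  by (simp add: svec_def ssum_def fun_eq_iff sum_unfold_sum_mset)

lemma nzrows_inj: "inj_on E {..<n} \<Longrightarrow> nzrows n E = mset_set (nzset n E)"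
  by (simp add: nzrows_def rows_def image_mset_mset_set nzset_def set_diff_eq)

lemma colsum_inj: "inj_on E {..<n} \<Longrightarrow> colsum n E = ssum (nzset n E)"
  by (simp add: colsum_nzrows nzrows_inj svec_mset_set nzset_def)

lemma nzset_P2:
  assumes E: "E \<in> ExM n d" and inj: "inj_on E {..<n}"
  shows "nzset n E \<in> P2 n d"
proof -
  have c: "card (E ` {..<n}) = n" using card_image[OF inj] by simp
  have "card (nzset n E) = n \<or> card (nzset n E) + 1 = n"
  proof (cases "(\<lambda>_. 0::nat) \<in> E ` {..<n}")
    case True
    then have "n \<ge> 1" by auto
    then show ?thesis using True c by (simp add: nzset_def card_Diff_singleton)
  next
    case False then show ?thesis using c by (simp add: nzset_def)
  qed
  moreover have "ssum (nzset n E) \<in> vecs_deg n d"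
    using ExM_colsum[OF E] colsum_inj[OF inj] by simp
  moreover have "\<forall>v\<in>nzset n E. v \<in> vecN n \<and> v \<noteq> (\<lambda>_. 0)"
    using ExM_row_vecN[OF E] by (auto simp: nzset_def)
  ultimately show ?thesis by (simp add: P2_def nzset_def)
qed

lemma P2_nzset:
  assumes S: "S \<in> P2 n d" shows "\<exists>E\<in>ExM n d. inj_on E {..<n} \<and> nzset n E = S"
proof -
  have fS: "finite S" using S by (simp add: P2_def)
  obtain xs where xs: "set xs = S" "distinct xs" using finite_distinct_list[OF fS] by blast
  have z: "(\<lambda>_. 0::nat) \<notin> S" using S by (auto simp: P2_def)
  define ys where "ys = (if length xs = n then xs else xs @ [\<lambda>_. 0])"
  have lxs: "length xs = card S" using xs distinct_card by metis
  have len: "length ys = n" using S lxs by (auto simp: ys_def P2_def)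
  have dys: "distinct ys" using xs z by (auto simp: ys_def)
  have zv: "(\<lambda>_. 0::nat) \<in> vecN n" by (simp add: vecN_def)
  have set: "set ys \<subseteq> vecN n" using S xs zv by (auto simp: ys_def P2_def)
  have sys: "set ys - {\<lambda>_. 0} = S" using xs z by (auto simp: ys_def)
  have mk_img: "mk n ys ` {..<n} = set ys"
  proof -
    have "mk n ys ` {..<n} = (\<lambda>i. ys ! i) ` {..<n}"
      using mk_row[OF _ set len] by (intro image_cong) auto
    also have "\<dots> = set ys" using len by (simp add: set_conv_nth lessThan_def image_Collect)
    finally show ?thesis .
  qed
  have inj: "inj_on (mk n ys) {..<n}"
  proof
    fix i j assume ij: "i \<in> {..<n}" "j \<in> {..<n}" "mk n ys i = mk n ys j"
    have "ys ! i = ys ! j" using mk_row[OF _ set len] ij by simp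
    then show "i = j" using nth_eq_iff_index_eq[OF dys, of i j] len \<open>i \<in> {..<n}\<close> \<open>j \<in> {..<n}\<close> by simp
  qed
  have ns: "nzset n (mk n ys) = S" using mk_img sys by (simp add: nzset_def)
  have "svec (mset ys) = ssum S"
  proof -
    have "svec (mset ys) = svec (filter_mset (\<lambda>v. v \<noteq> (\<lambda>_. 0)) (mset ys))" by (simp add: svec_nz)
    also have "filter_mset (\<lambda>v. v \<noteq> (\<lambda>_. 0)) (mset ys) = mset_set S"
    proof -
      have "mset ys = mset_set (set ys)" using mset_set_set[OF dys] by simp
      then have "filter_mset (\<lambda>v. v \<noteq> (\<lambda>_. 0)) (mset ys) = mset_set {v \<in> set ys. v \<noteq> (\<lambda>_. 0)}"
        by simp
      also have "{v \<in> set ys. v \<noteq> (\<lambda>_. 0)} = S" using sys by auto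
      finally show ?thesis .
    qed
    finally show ?thesis using svec_mset_set[OF fS] by simp
  qed
  then have sv: "svec (mset ys) \<in> vecs_deg n d" using S by (simp add: P2_def)
  have "mk n ys \<in> ExM n d" by (rule mk_ExM[OF set len sv])
  with inj ns show ?thesis by blast
qed

lemma finite_P2: "finite (P2 n d)"
proof -
  have "P2 n d \<subseteq> nzset n ` ExM n d"
  proof
    fix S assume "S \<in> P2 n d"
    then obtain E where "E \<in> ExM n d" "nzset n E = S" using P2_nzset by blast
    then show "S \<in> nzset n ` ExM n d" by (metis imageI)
  qed
  then show ?thesis by (rule finite_subset) (rule finite_imageI[OF finite_Ex])
qed

lemma nzset_perm: "\<sigma> permutes {..<n} \<Longrightarrow> nzset n (E \<circ> \<sigma>) = nzset n E"
proof -
  assume s: "\<sigma> permutes {..<n}"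
  have "(E \<circ> \<sigma>) ` {..<n} = E ` {..<n}"
    using image_comp[of E \<sigma> "{..<n}"] permutes_image[OF s] by metis
  then show ?thesis unfolding nzset_def by (simp only:)
qed

lemma inj_perm: "\<sigma> permutes {..<n} \<Longrightarrow> inj_on (E \<circ> \<sigma>) {..<n} \<longleftrightarrow> inj_on E {..<n}"
proof -
  assume s: "\<sigma> permutes {..<n}"
  show ?thesis using comp_inj_on_iff[of \<sigma> "{..<n}" E, OF permutes_inj_on[OF s]] permutes_image[OF s] by (simp only:)
qed

lemma colsum_perm: "\<sigma> permutes {..<n} \<Longrightarrow> colsum n (E \<circ> \<sigma>) = colsum n E"
proof -
  assume s: "\<sigma> permutes {..<n}"
  show ?thesis unfolding colsum_rows rows_perm[OF s] by (rule refl)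
qed

lemma perm_permutation: "\<sigma> permutes {..<(n::nat)} \<Longrightarrow> permutation \<sigma>"
proof -
  assume s: "\<sigma> permutes {..<n}"
  show ?thesis unfolding permutation_permutes using s by (intro exI[of _ "{..<n}"]) simp
qed

lemma noninj_swap:
  assumes "\<not> inj_on E {..<n}"
  obtains \<tau> where "\<tau> permutes {..<n}" "E \<circ> \<tau> = E" "sign \<tau> = -1"
proof -
  obtain i j where ij: "i < n" "j < n" "i \<noteq> j" "E i = E j" using assms by (auto simp: inj_on_def)
  let ?t = "Transposition.transpose i j"
  have "?t permutes {..<n}" using ij by (intro permutes_swap_id) auto
  moreover have "E \<circ> ?t = E"
  proof (rule ext)
    fix k show "(E \<circ> ?t) k = E k" using ij by (cases "k = i"; cases "k = j") simp_all
  qed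
  moreover have "sign ?t = -1" using ij by (simp add: sign_swap_id)
  ultimately show ?thesis using that by blast
qed




definition bsg :: "nat \<Rightarrow> (nat \<Rightarrow> nat \<Rightarrow> nat) \<Rightarrow> (nat \<Rightarrow> nat \<Rightarrow> nat) \<Rightarrow> complex" where
  "bsg n F E = (\<Sum>\<sigma>\<in>{\<sigma>. \<sigma> permutes {..<n} \<and> F \<circ> \<sigma> = E}. of_int (sign \<sigma>))"

lemma bsg_in:
  assumes inj: "inj_on F {..<n}" and t: "\<tau> permutes {..<n}"
  shows "bsg n F (F \<circ> \<tau>) = of_int (sign \<tau>)"
proof -
  have "{\<sigma>. \<sigma> permutes {..<n} \<and> F \<circ> \<sigma> = F \<circ> \<tau>} = {\<tau>}"
  proof (intro equalityI subsetI)
    fix \<sigma> assume "\<sigma> \<in> {\<sigma>. \<sigma> permutes {..<n} \<and> F \<circ> \<sigma> = F \<circ> \<tau>}"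
    then have s: "\<sigma> permutes {..<n}" and eq: "F \<circ> \<sigma> = F \<circ> \<tau>" by auto
    have "\<sigma> k = \<tau> k" for k
    proof (cases "k < n")
      case True
      have "F (\<sigma> k) = F (\<tau> k)" using fun_cong[OF eq, of k] by simp
      moreover have "\<sigma> k \<in> {..<n}" "\<tau> k \<in> {..<n}"
        using True permutes_in_image[OF s, of k] permutes_in_image[OF t, of k] by auto
      ultimately show ?thesis using inj by (auto dest: inj_onD)
    next
      case False
      then show ?thesis using permutes_not_in[OF s, of k] permutes_not_in[OF t, of k] by auto
    qed
    then show "\<sigma> \<in> {\<tau>}" by (auto simp: fun_eq_iff)
  next
    fix \<sigma> assume "\<sigma> \<in> {\<tau>}"
    then show "\<sigma> \<in> {\<sigma>. \<sigma> permutes {..<n} \<and> F \<circ> \<sigma> = F \<circ> \<tau>}" using t by auto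
  qed
  then show ?thesis by (simp add: bsg_def)
qed

lemma bsg_out:
  assumes "\<And>\<tau>. \<tau> permutes {..<n} \<Longrightarrow> F \<circ> \<tau> \<noteq> E"
  shows "bsg n F E = 0"
proof -
  have em: "{\<sigma>. \<sigma> permutes {..<n} \<and> F \<circ> \<sigma> = E} = {}" using assms by auto
  show ?thesis unfolding bsg_def em by (rule sum.empty)
qed

lemma ch_sign: "ch n (Ind n d (\<lambda>\<sigma>. of_int (sign \<sigma>))) t = (\<Sum>S\<in>P2 n d. tpow n t (ssum S))"
proof -
  define e where "e S = (SOME E. E \<in> ExM n d \<and> inj_on E {..<n} \<and> nzset n E = S)" for S
  have e: "e S \<in> ExM n d \<and> inj_on (e S) {..<n} \<and> nzset n (e S) = S" if "S \<in> P2 n d" for S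
  proof -
    have "\<exists>E. E \<in> ExM n d \<and> inj_on E {..<n} \<and> nzset n E = S" using P2_nzset[OF that] by blast
    then show ?thesis unfolding e_def by (rule someI_ex)
  qed
  define b where "b S E = bsg n (e S) E" for S E
  have orbit_nz: "nzset n E = S" if "S \<in> P2 n d" "\<tau> permutes {..<n}" "e S \<circ> \<tau> = E" for S \<tau> E
    using that e[OF that(1)] nzset_perm[OF that(2), of "e S"] by simp
  have orbit_inj: "inj_on E {..<n}" if "S \<in> P2 n d" "\<tau> permutes {..<n}" "e S \<circ> \<tau> = E" for S \<tau> E
    using that e[OF that(1)] inj_perm[OF that(2), of "e S"] by simp
  show ?thesis
  proof (rule orbit_trace[where e=e and b=b])
    show "finite (P2 n d)" by (rule finite_P2)
    show "e k \<in> ExM n d" if "k \<in> P2 n d" for k using e[OF that] by blast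
    show "b k (e j) = (if k = j then 1 else 0)" if k: "k \<in> P2 n d" and j: "j \<in> P2 n d" for k j
    proof (cases "k = j")
      case True
      have "b k (e j) = bsg n (e k) (e k \<circ> id)" using True by (simp add: b_def)
      also have "\<dots> = 1" using bsg_in[of "e k" n id] e[OF k] permutes_id by simp
      finally show ?thesis using True by simp
    next
      case False
      have "bsg n (e k) (e j) = 0"
      proof (rule bsg_out)
        fix \<tau> assume t: "\<tau> permutes {..<n}"
        show "e k \<circ> \<tau> \<noteq> e j"
        proof
          assume "e k \<circ> \<tau> = e j"
          then have "nzset n (e j) = k" using orbit_nz[OF k t] by simp
          then show False using e[OF j] False by simp
        qed
      qed
      then show ?thesis using False by (simp add: b_def)
    qed
    show "(\<lambda>\<sigma>. of_int (sign \<sigma>) :: complex) (inv \<sigma>) = (\<lambda>\<sigma>. of_int (sign \<sigma>)) \<sigma>"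
      if "\<sigma> permutes {..<n}" for \<sigma>
      using sign_inverse[OF perm_permutation[OF that]] by simp
    show "b k (E \<circ> \<sigma>) = (\<lambda>\<sigma>. of_int (sign \<sigma>)) \<sigma> * b k E"
      if k: "k \<in> P2 n d" and s: "\<sigma> permutes {..<n}" and E: "E \<in> ExM n d" for k \<sigma> E
    proof (cases "\<exists>\<tau>. \<tau> permutes {..<n} \<and> E = e k \<circ> \<tau>")
      case True
      then obtain \<tau> where t: "\<tau> permutes {..<n}" and Et: "E = e k \<circ> \<tau>" by blast
      have ts: "\<tau> \<circ> \<sigma> permutes {..<n}" by (rule permutes_compose[OF s t])
      have "b k (E \<circ> \<sigma>) = bsg n (e k) (e k \<circ> (\<tau> \<circ> \<sigma>))" by (simp add: b_def Et o_assoc)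
      also have "\<dots> = of_int (sign (\<tau> \<circ> \<sigma>))" using bsg_in[OF _ ts] e[OF k] by simp
      also have "\<dots> = of_int (sign \<tau>) * of_int (sign \<sigma>)"
        by (simp add: sign_compose[OF perm_permutation[OF t] perm_permutation[OF s]])
      also have "of_int (sign \<tau>) = b k E" using bsg_in[OF _ t] e[OF k] by (simp add: b_def Et)
      finally have X: "b k (E \<circ> \<sigma>) = b k E * of_int (sign \<sigma>)" .
      show ?thesis unfolding X by (simp add: mult.commute)
    next
      case False
      have "b k E = 0" unfolding b_def by (rule bsg_out) (use False in auto)
      moreover have "b k (E \<circ> \<sigma>) = 0" unfolding b_def
      proof (rule bsg_out)
        fix \<tau> assume t: "\<tau> permutes {..<n}"
        show "e k \<circ> \<tau> \<noteq> E \<circ> \<sigma>"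
        proof
          assume eq: "e k \<circ> \<tau> = E \<circ> \<sigma>"
          have "E = E \<circ> \<sigma> \<circ> inv \<sigma>" by (simp add: o_assoc[symmetric] permutes_inv_o[OF s])
          also have "\<dots> = e k \<circ> (\<tau> \<circ> inv \<sigma>)" by (simp add: eq[symmetric] o_assoc)
          finally have "E = e k \<circ> (\<tau> \<circ> inv \<sigma>)" .
          moreover have "\<tau> \<circ> inv \<sigma> permutes {..<n}" by (rule permutes_compose[OF permutes_inv[OF s] t])
          ultimately show False using False by blast
        qed
      qed
      ultimately show ?thesis by simp
    qed
    show "tpow n t (colsum n E) * b k E = tpow n t (ssum k) * b k E"
      if k: "k \<in> P2 n d" and E: "E \<in> ExM n d" for k E
    proof (cases "\<exists>\<tau>. \<tau> permutes {..<n} \<and> E = e k \<circ> \<tau>")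
      case True
      then obtain \<tau> where t: "\<tau> permutes {..<n}" and Et: "E = e k \<circ> \<tau>" by blast
      have "colsum n E = colsum n (e k)" using colsum_perm[OF t] Et by simp
      also have "\<dots> = ssum k" using colsum_inj[of "e k" n] e[OF k] by simp
      finally show ?thesis by simp
    next
      case False
      have "b k E = 0" unfolding b_def by (rule bsg_out) (use False in auto)
      then show ?thesis by simp
    qed
  next
    fix a assume inv: "\<forall>\<sigma>. \<sigma> permutes {..<n} \<longrightarrow> (\<forall>E\<in>ExM n d. a (E \<circ> \<sigma>) = (\<lambda>\<sigma>. of_int (sign \<sigma>) :: complex) \<sigma> * a E)"
    show "\<forall>E\<in>ExM n d. a E = (\<Sum>k\<in>P2 n d. a (e k) * b k E)"
    proof
      fix E assume E: "E \<in> ExM n d"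
      show "a E = (\<Sum>k\<in>P2 n d. a (e k) * b k E)"
      proof (cases "inj_on E {..<n}")
        case True
        obtain S0 where S0def: "S0 = nzset n E" by blast
        have S: "S0 \<in> P2 n d" unfolding S0def by (rule nzset_P2[OF E True])
        have "nzrows n (e S0) = nzrows n E" using e[OF S] True S0def by (simp add: nzrows_inj)
        then obtain \<tau> where t: "\<tau> permutes {..<n}" and Et: "E = e S0 \<circ> \<tau>"
          using nzrows_eq_perm[of "e S0" n d E] e[OF S] E by metis
        have bz: "b k E = (if k = S0 then of_int (sign \<tau>) else 0)" if k: "k \<in> P2 n d" for k
        proof (cases "k = S0")
          case True
          then show ?thesis using bsg_in[OF _ t] e[OF S] by (simp add: b_def Et)
        next
          case False
          have "bsg n (e k) E = 0"
          proof (rule bsg_out)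
            fix \<tau>' assume t': "\<tau>' permutes {..<n}"
            show "e k \<circ> \<tau>' \<noteq> E" using orbit_nz[OF k t'] False S0def by auto
          qed
          then show ?thesis using False by (simp add: b_def)
        qed
        have "(\<Sum>k\<in>P2 n d. a (e k) * b k E) = (\<Sum>k\<in>P2 n d. if k = S0 then a (e S0) * of_int (sign \<tau>) else 0)"
          by (rule sum.cong) (auto simp: bz)
        also have "\<dots> = a (e S0) * of_int (sign \<tau>)" using S finite_P2 by simp
        also have "\<dots> = a E" using inv t e[OF S] Et by (simp add: mult.commute)
        finally show ?thesis by simp
      next
        case False
        obtain \<tau> where t: "\<tau> permutes {..<n}" and Et: "E \<circ> \<tau> = E" and st: "sign \<tau> = -1"
          using noninj_swap[OF False] by blast
        have "a E = - a E" using inv t E Et st by (metis mult_minus1 of_int_minus of_int_1)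
        then have aE: "a E = 0" by simp
        have "b k E = 0" if k: "k \<in> P2 n d" for k
          unfolding b_def
        proof (rule bsg_out)
          fix \<tau>' assume t': "\<tau>' permutes {..<n}"
          show "e k \<circ> \<tau>' \<noteq> E" using orbit_inj[OF k t'] False by auto
        qed
        then show ?thesis using aE by simp
      qed
    qed
  qed
qed

lemma sum_P2: "(\<Sum>S\<in>P2 n d. tpow n t (ssum S)) = (\<Sum>x\<in>vecs_deg n d. of_nat (qk n n x) * tpow n t x)"
proof -
  have "(\<Sum>S\<in>P2 n d. tpow n t (ssum S)) = (\<Sum>x\<in>vecs_deg n d. \<Sum>S\<in>{S. S \<in> P2 n d \<and> ssum S = x}. tpow n t (ssum S))"
    by (rule sum.group[symmetric, OF finite_P2 finite_vecs_deg]) (auto simp: P2_def)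
  also have "\<dots> = (\<Sum>x\<in>vecs_deg n d. of_nat (qk n n x) * tpow n t x)"
  proof (rule sum.cong[OF refl])
    fix x assume x: "x \<in> vecs_deg n d"
    have "{S. S \<in> P2 n d \<and> ssum S = x} = {S :: (nat \<Rightarrow> nat) set. finite S \<and>
       (\<forall>v\<in>S. v \<in> vecN n \<and> v \<noteq> (\<lambda>_. 0)) \<and> (\<lambda>i. \<Sum>v\<in>S. v i) = x \<and>
       (card S = n \<or> card S + 1 = n)}"
      using x by (auto simp: P2_def ssum_def)
    then have "card {S. S \<in> P2 n d \<and> ssum S = x} = qk n n x" by (simp add: qk_def)
    moreover have "(\<Sum>S\<in>{S. S \<in> P2 n d \<and> ssum S = x}. tpow n t (ssum S)) = of_nat (card {S. S \<in> P2 n d \<and> ssum S = x}) * tpow n t x"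
      by simp
    ultimately show "(\<Sum>S\<in>{S. S \<in> P2 n d \<and> ssum S = x}. tpow n t (ssum S)) = of_nat (qk n n x) * tpow n t x" by simp
  qed
  finally show ?thesis .
qed

theorem lemma4:
  fixes n d :: nat and t :: "nat \<Rightarrow> complex"
  assumes "n \<ge> 1"
  shows "ch n (Ind n d (\<lambda>\<sigma>. 1)) t = (\<Sum>x\<in>vecs_deg n d. of_nat (pk n n x) * tpow n t x)
         \<and> ch n (Ind n d (\<lambda>\<sigma>. of_int (sign \<sigma>))) t = (\<Sum>x\<in>vecs_deg n d. of_nat (qk n n x) * tpow n t x)"
  using ch_triv sum_P1 ch_sign sum_P2 by simp


end
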